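(* For vectors $v,v'\in\mathbb{R}^2$ with $v\neq\pm v'$ and $\tau>0$, let $E(v,v',\tau)$ be the set of $\gamma\in SL(2,\mathbb{R})$ such that $$\|\gamma\|\leqslant2,\quad e^{-\tau}\leqslant\|\gamma v\|\leqslant e^{\tau},\quad e^{-\tau}\leqslant\|\gamma v'\|\leqslant e^{\tau}.$$ Then the Haar measure of $E(v,v',\tau)$ is $O(\tau^{3/2})$ as $\tau\to0$, with implied constants uniform when $\|v-v'\|$ and $\|v+v'\|$ are bounded away from $0$: for every $c>0$ there exist $C,\tau_0>0$ such that the Haar measure of $E(v,v',\tau)$ is $\leqslant C\tau^{3/2}$ for all $0<\tau<\tau_0$ and all $v,v'$ with $\|v-v'\|\geqslant c$, $\|v+v'\|\geqslant c$.
   Context: $\|\cdot\|$ is the Euclidean norm on $\mathbb{R}^2$ and, for matrices, the associated operator norm. A fixed Haar measure on $SL(2,\mathbb{R})$ is used. *)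

theory Defs
  imports "HOL-Analysis.Analysis"
begin

text \<open>Matrices in SL(2,R) with nonzero upper-left entry, parametrised by (a,b,c):
  rows (a, b) and (c, (1+b c)/a).\<close>
definition sl2_of :: "real \<Rightarrow> real \<Rightarrow> real \<Rightarrow> real^2^2" where
  "sl2_of a b c = vector [vector [a, b], vector [c, (1 + b * c) / a]]"

text \<open>A (fixed) Haar measure on SL(2,R): in the coordinates (a,b,c) above it is
  da db dc / |a|; the complement {a = 0} is a null set.\<close>
definition haar_SL2 :: "(real^2^2) set \<Rightarrow> ennreal" where
  "haar_SL2 E = (\<integral>\<^sup>+ p. (case p of (a, b, c) \<Rightarrow>
      (if a \<noteq> 0 \<and> sl2_of a b c \<in> E then ennreal (1 / \<bar>a\<bar>) else 0))
      \<partial>(lborel :: (real \<times> real \<times> real) measure))"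

definition E_set :: "real^2 \<Rightarrow> real^2 \<Rightarrow> real \<Rightarrow> (real^2^2) set" where
  "E_set v v' \<tau> = {\<gamma>. det \<gamma> = 1 \<and> onorm (\<lambda>x. \<gamma> *v x) \<le> 2
     \<and> exp (-\<tau>) \<le> norm (\<gamma> *v v) \<and> norm (\<gamma> *v v) \<le> exp \<tau>
     \<and> exp (-\<tau>) \<le> norm (\<gamma> *v v') \<and> norm (\<gamma> *v v') \<le> exp \<tau>}"

end

theory Submission
  imports Defs
begin


lemma norm2: "norm (x::real^2) = sqrt ((x$1)^2 + (x$2)^2)"
  by (simp add: norm_vec_def L2_set_def sum_2)

lemma mv2: "((g::real^2^2) *v (v::real^2)) $ 1 = g$1$1 * v$1 + g$1$2 * v$2"
          "(g *v v) $ 2 = g$2$1 * v$1 + g$2$2 * v$2"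
  by (simp_all add: matrix_vector_mult_def sum_2)

lemma exp_diff_bound:
  assumes "0 \<le> (t::real)" "t \<le> 1/2"
  shows "exp t ^ 2 - exp (-t) ^ 2 \<le> 8 * t"
proof -
  have e1: "exp t ^ 2 = exp (2*t)" by (simp add: power2_eq_square exp_add[symmetric])
  have e2: "exp (-t) ^ 2 = exp (-2*t)" by (simp add: power2_eq_square exp_add[symmetric])
  have a: "1 - 2*t \<le> exp (-2*t)" using exp_ge_add_one_self[of "-2*t"] by simp
  have b: "exp (2*t) * exp (-2*t) = 1" by (simp add: exp_add[symmetric])
  have c: "exp (2*t) \<le> 3"
  proof -
    have "exp (2*t) \<le> exp 1" using assms by simp
    also have "\<dots> \<le> 3" using exp_le by simp
    finally show ?thesis .
  qed
  have d: "exp (2*t) * (1 - 2*t) \<le> 1"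
  proof -
    have "exp (2*t) * (1 - 2*t) \<le> exp (2*t) * exp (-2*t)" by (rule mult_left_mono[OF a]) simp
    also have "\<dots> = 1" by (rule b)
    finally show ?thesis .
  qed
  have "exp (2*t) - 1 \<le> 2*t*exp(2*t)" using d by (simp add: algebra_simps)
  also have "\<dots> \<le> 2*t*3" using c assms by (intro mult_left_mono) auto
  finally show ?thesis unfolding e1 e2 using a by linarith
qed

lemma inv_bound:
  fixes g11 g12 g21 g22 w1 w2 :: real
  assumes "g11*g22 - g12*g21 = 1" "g11^2+g21^2 \<le> 4" "g12^2+g22^2 \<le> 4"
  shows "w1^2+w2^2 \<le> 8*((g11*w1+g12*w2)^2 + (g21*w1+g22*w2)^2)"
proof -
  define z1 where "z1 = g11*w1+g12*w2"
  define z2 where "z2 = g21*w1+g22*w2"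
  have h1: "w1 = g22*z1 - g12*z2"
  proof -
    have "g22*z1 - g12*z2 = (g11*g22 - g12*g21)*w1" by (simp add: z1_def z2_def algebra_simps)
    then show ?thesis using assms(1) by simp
  qed
  have h2: "w2 = g11*z2 - g21*z1"
  proof -
    have "g11*z2 - g21*z1 = (g11*g22 - g12*g21)*w2" by (simp add: z1_def z2_def algebra_simps)
    then show ?thesis using assms(1) by simp
  qed
  have c1: "(g22*z1 - g12*z2)^2 \<le> (g22^2+g12^2)*(z1^2+z2^2)"
  proof -
    have "(g22^2+g12^2)*(z1^2+z2^2) - (g22*z1 - g12*z2)^2 = (g22*z2+g12*z1)^2"
      by (simp add: power2_eq_square algebra_simps)
    then show ?thesis by (metis diff_ge_0_iff_ge zero_le_power2)
  qed
  have c2: "(g11*z2 - g21*z1)^2 \<le> (g11^2+g21^2)*(z1^2+z2^2)"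
  proof -
    have "(g11^2+g21^2)*(z1^2+z2^2) - (g11*z2 - g21*z1)^2 = (g11*z1+g21*z2)^2"
      by (simp add: power2_eq_square algebra_simps)
    then show ?thesis by (metis diff_ge_0_iff_ge zero_le_power2)
  qed
  have zz: "0 \<le> z1^2+z2^2" by simp
  have "(g22^2+g12^2)*(z1^2+z2^2) \<le> 4*(z1^2+z2^2)"
    using mult_right_mono[OF _ zz, of "g22^2+g12^2" 4] assms(3) by (simp add: add.commute)
  moreover have "(g11^2+g21^2)*(z1^2+z2^2) \<le> 4*(z1^2+z2^2)"
    using mult_right_mono[OF assms(2) zz] by simp
  ultimately have "w1^2 + w2^2 \<le> 8*(z1^2+z2^2)" using c1 c2 h1 h2 by simp
  then show ?thesis unfolding z1_def z2_def .
qed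
lemma sq_of_sqrt_le: "0 \<le> s \<Longrightarrow> sqrt s \<le> r \<Longrightarrow> s \<le> r^2"
  by (metis real_sqrt_ge_zero power_mono real_sqrt_pow2)
lemma sq_le_of_sqrt: "0 \<le> s \<Longrightarrow> r \<le> sqrt s \<Longrightarrow> 0 \<le> r \<Longrightarrow> r^2 \<le> s"
  by (metis power_mono real_sqrt_pow2)

lemma D_bound:
  fixes v u :: "real^2" and g :: "real^2^2" and c \<tau> :: real
  assumes g: "g \<in> E_set v u \<tau>" and t: "0 < \<tau>" "\<tau> \<le> 1/2" "\<tau> \<le> c^2/128" and c: "c > 0"
    and nv: "norm (v - u) \<ge> c" "norm (v+u) \<ge> c"
  shows "c^2/32 \<le> \<bar>v$1*u$2 - v$2*u$1\<bar>"
proof -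
  define p q pp qq where "p = v$1" "q = v$2" "pp = u$1" "qq = u$2"
  define g11 g12 g21 g22 where "g11 = g$1$1" "g12 = g$1$2" "g21 = g$2$1" "g22 = g$2$2"
  define X1 X2 Y1 Y2 where "X1 = g11*p+g12*q" "X2 = g21*p+g22*q" "Y1 = g11*pp+g12*qq" "Y2 = g21*pp+g22*qq"
  define L U where "L = exp (-\<tau>)^2" "U = exp \<tau> ^2"
  have det: "g11*g22 - g12*g21 = 1" using g by (simp add: E_set_def det_2 g11_g12_g21_g22_def)
  have on: "onorm (\<lambda>x. g *v x) \<le> 2" using g by (simp add: E_set_def)
  have colb: "norm (g *v x) \<le> 2" if "norm x = 1" for x
    using onorm[OF matrix_vector_mul_bounded_linear[of g], of x] on that by simp
  have "norm (g *v vector [1,0]) \<le> 2" by (rule colb) (simp add: norm2)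
  then have col1: "g11^2+g21^2 \<le> 4"
    by (intro sq_of_sqrt_le[where r=2, simplified]) (auto simp: norm2 mv2 g11_g12_g21_g22_def)
  have "norm (g *v vector [0,1]) \<le> 2" by (rule colb) (simp add: norm2)
  then have col2: "g12^2+g22^2 \<le> 4"
    by (intro sq_of_sqrt_le[where r=2, simplified]) (auto simp: norm2 mv2 g11_g12_g21_g22_def)
  have nx: "L \<le> X1^2+X2^2 \<and> X1^2+X2^2 \<le> U"
  proof -
    have "exp (-\<tau>) \<le> sqrt (X1^2+X2^2)" "sqrt (X1^2+X2^2) \<le> exp \<tau>"
      using g by (simp_all add: E_set_def norm2 mv2 X1_X2_Y1_Y2_def g11_g12_g21_g22_def p_q_pp_qq_def)
    then show ?thesis unfolding L_U_def
      by (auto intro: sq_le_of_sqrt sq_of_sqrt_le)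
  qed
  have ny: "L \<le> Y1^2+Y2^2 \<and> Y1^2+Y2^2 \<le> U"
  proof -
    have "exp (-\<tau>) \<le> sqrt (Y1^2+Y2^2)" "sqrt (Y1^2+Y2^2) \<le> exp \<tau>"
      using g by (simp_all add: E_set_def norm2 mv2 X1_X2_Y1_Y2_def g11_g12_g21_g22_def p_q_pp_qq_def)
    then show ?thesis unfolding L_U_def
      by (auto intro: sq_le_of_sqrt sq_of_sqrt_le)
  qed
  have vm: "c^2 \<le> (p-pp)^2+(q-qq)^2"
    using nv(1) c by (intro sq_le_of_sqrt) (auto simp: norm2 p_q_pp_qq_def)
  have vp: "c^2 \<le> (p+pp)^2+(q+qq)^2"
    using nv(2) c by (intro sq_le_of_sqrt) (auto simp: norm2 p_q_pp_qq_def)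
  define A B where "A = (X1-Y1)^2+(X2-Y2)^2" "B = (X1+Y1)^2+(X2+Y2)^2"
  have "(p-pp)^2+(q-qq)^2 \<le> 8*A"
  proof -
    have "g11*(p-pp)+g12*(q-qq) = X1-Y1" "g21*(p-pp)+g22*(q-qq) = X2-Y2"
      by (simp_all add: X1_X2_Y1_Y2_def algebra_simps)
    with inv_bound[OF det col1 col2, of "p-pp" "q-qq"] show ?thesis by (simp add: A_B_def)
  qed
  then have Ab: "c^2/8 \<le> A" using vm by simp
  have "(p+pp)^2+(q+qq)^2 \<le> 8*B"
  proof -
    have "g11*(p+pp)+g12*(q+qq) = X1+Y1" "g21*(p+pp)+g22*(q+qq) = X2+Y2"
      by (simp_all add: X1_X2_Y1_Y2_def algebra_simps)
    with inv_bound[OF det col1 col2, of "p+pp" "q+qq"] show ?thesis by (simp add: A_B_def)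
  qed
  then have Bb: "c^2/8 \<le> B" using vp by simp
  have AB: "c^2/8 * (c^2/8) \<le> A*B" using Ab Bb by (intro mult_mono) (auto simp: A_B_def)
  have iden: "A*B = ((X1^2+X2^2) - (Y1^2+Y2^2))^2 + 4*(X1*Y2-X2*Y1)^2"
    by (simp add: A_B_def power2_eq_square algebra_simps)
  have detD: "X1*Y2-X2*Y1 = p*qq-q*pp"
  proof -
    have "X1*Y2-X2*Y1 = (g11*g22 - g12*g21)*(p*qq-q*pp)"
      by (simp add: X1_X2_Y1_Y2_def algebra_simps)
    then show ?thesis using det by simp
  qed
  have UL: "U - L \<le> c^2/16" using exp_diff_bound[of \<tau>] t unfolding L_U_def by linarith
  have "\<bar>(X1^2+X2^2) - (Y1^2+Y2^2)\<bar> \<le> c^2/16" using nx ny UL by linarith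
  then have "((X1^2+X2^2) - (Y1^2+Y2^2))^2 \<le> (c^2/16)^2"
    by (metis abs_le_square_iff abs_of_nonneg power2_abs zero_le_power2 divide_nonneg_pos zero_less_numeral abs_abs)
  then have "c^2/8 * (c^2/8) - (c^2/16)^2 \<le> 4*(p*qq-q*pp)^2" using AB iden[unfolded detD] by linarith
  moreover have "(c^2/32)^2 * 12 = c^2/8*(c^2/8) - (c^2/16)^2" by (simp add: power2_eq_square field_simps)
  moreover have "0 \<le> (p*qq-q*pp)^2" by simp
  ultimately have "(c^2/32)^2 \<le> (p*qq-q*pp)^2" by linarith
  then have "\<bar>c^2/32\<bar> \<le> \<bar>p*qq-q*pp\<bar>" by (simp only: abs_le_square_iff)
  then show ?thesis by (simp add: p_q_pp_qq_def)
qed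


definition gf :: "real \<Rightarrow> real \<Rightarrow> real \<Rightarrow> real \<Rightarrow> real \<Rightarrow> real \<Rightarrow> real \<Rightarrow> real \<Rightarrow> real \<Rightarrow> ennreal" where
  "gf p q pp qq L U a b c = (if a \<noteq> 0 \<and> L \<le> (a*p+b*q)^2 + (c*p+(1+b*c)/a*q)^2 \<and> (a*p+b*q)^2 + (c*p+(1+b*c)/a*q)^2 \<le> U
     \<and> L \<le> (a*pp+b*qq)^2 + (c*pp+(1+b*c)/a*qq)^2 \<and> (a*pp+b*qq)^2 + (c*pp+(1+b*c)/a*qq)^2 \<le> U
     then ennreal (1/\<bar>a\<bar>) else 0)"

lemma gf_meas: "(\<lambda>x. gf p q pp qq L U (fst x) (fst (snd x)) (snd (snd x))) \<in> borel_measurable (lborel \<Otimes>\<^sub>M (lborel \<Otimes>\<^sub>M lborel))"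
  unfolding gf_def by measurable

lemma int3:
  fixes f :: "real \<times> real \<times> real \<Rightarrow> ennreal"
  assumes f: "f \<in> borel_measurable (lborel \<Otimes>\<^sub>M (lborel \<Otimes>\<^sub>M lborel))"
  shows "(\<integral>\<^sup>+x. f x \<partial>lborel) = (\<integral>\<^sup>+a. \<integral>\<^sup>+b. \<integral>\<^sup>+c. f (a,b,c) \<partial>lborel \<partial>lborel \<partial>lborel)"
proof -
  have f1: "f \<in> borel_measurable (lborel \<Otimes>\<^sub>M (lborel :: (real\<times>real) measure))"
    using f by (simp add: lborel_prod)
  have f2: "(\<lambda>y. f (a, y)) \<in> borel_measurable (lborel \<Otimes>\<^sub>M lborel)" for a
    using f by measurable
  have "(\<integral>\<^sup>+x. f x \<partial>lborel) = (\<integral>\<^sup>+x. f x \<partial>(lborel \<Otimes>\<^sub>M (lborel :: (real\<times>real) measure)))"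
    by (simp add: lborel_prod)
  also have "\<dots> = (\<integral>\<^sup>+a. \<integral>\<^sup>+bc. f (a,bc) \<partial>lborel \<partial>lborel)"
    by (rule lborel.nn_integral_fst[symmetric, OF f1])
  also have "\<dots> = (\<integral>\<^sup>+a. \<integral>\<^sup>+b. \<integral>\<^sup>+c. f (a,b,c) \<partial>lborel \<partial>lborel \<partial>lborel)"
  proof (rule nn_integral_cong)
    fix a
    have "(\<integral>\<^sup>+bc. f (a,bc) \<partial>(lborel::(real\<times>real) measure)) = (\<integral>\<^sup>+bc. f (a,bc) \<partial>(lborel \<Otimes>\<^sub>M lborel))"
      by (simp add: lborel_prod)
    also have "\<dots> = (\<integral>\<^sup>+b. \<integral>\<^sup>+c. f (a,b,c) \<partial>lborel \<partial>lborel)"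
      by (rule lborel.nn_integral_fst[symmetric, OF f2])
    finally show "(\<integral>\<^sup>+bc. f (a,bc) \<partial>lborel) = (\<integral>\<^sup>+b. \<integral>\<^sup>+c. f (a,b,c) \<partial>lborel \<partial>lborel)" .
  qed
  finally show ?thesis .
qed

lemma int2:
  fixes f :: "real \<times> real \<Rightarrow> ennreal"
  assumes f: "f \<in> borel_measurable (lborel \<Otimes>\<^sub>M lborel)"
  shows "(\<integral>\<^sup>+x. f x \<partial>lborel) = (\<integral>\<^sup>+a. \<integral>\<^sup>+b. f (a,b) \<partial>lborel \<partial>lborel)"
proof -
  have "(\<integral>\<^sup>+x. f x \<partial>lborel) = (\<integral>\<^sup>+x. f x \<partial>(lborel \<Otimes>\<^sub>M (lborel :: real measure)))"
    by (simp add: lborel_prod)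
  also have "\<dots> = (\<integral>\<^sup>+a. \<integral>\<^sup>+b. f (a,b) \<partial>lborel \<partial>lborel)"
    by (rule lborel.nn_integral_fst[symmetric, OF f])
  finally show ?thesis .
qed

lemma swap3:
  fixes F :: "real \<Rightarrow> real \<Rightarrow> real \<Rightarrow> ennreal"
  assumes m: "(\<lambda>x. F (fst x) (fst (snd x)) (snd (snd x))) \<in> borel_measurable (lborel \<Otimes>\<^sub>M (lborel \<Otimes>\<^sub>M lborel))"
  shows "(\<integral>\<^sup>+a. \<integral>\<^sup>+x. \<integral>\<^sup>+y. F a x y \<partial>lborel \<partial>lborel \<partial>lborel)
       = (\<integral>\<^sup>+x. \<integral>\<^sup>+y. \<integral>\<^sup>+a. F a x y \<partial>lborel \<partial>lborel \<partial>lborel)"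
proof -
  have P: "pair_sigma_finite lborel (lborel :: (real\<times>real) measure)"
    by (simp add: pair_sigma_finite_def lborel.sigma_finite_measure_axioms)
  have m1: "(\<lambda>z. F (fst z) (fst (snd z)) (snd (snd z))) \<in> borel_measurable (lborel \<Otimes>\<^sub>M (lborel::(real\<times>real) measure))"
    using m by (simp add: lborel_prod)
  have m2: "(\<lambda>xy. F a (fst xy) (snd xy)) \<in> borel_measurable (lborel \<Otimes>\<^sub>M lborel)" for a
  proof -
    have "(\<lambda>xy. (a,xy)) \<in> (lborel \<Otimes>\<^sub>M lborel) \<rightarrow>\<^sub>M (lborel \<Otimes>\<^sub>M (lborel \<Otimes>\<^sub>M lborel))" by measurable
    from measurable_compose[OF this m] show ?thesis by simp
  qed
  have m3: "(\<lambda>xy. \<integral>\<^sup>+a. F a (fst xy) (snd xy) \<partial>lborel) \<in> borel_measurable (lborel \<Otimes>\<^sub>M lborel)"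
  proof -
    have "(\<lambda>xy. \<integral>\<^sup>+a. F a (fst xy) (snd xy) \<partial>lborel) \<in> borel_measurable (lborel :: (real\<times>real) measure)"
      using lborel.borel_measurable_nn_integral_fst[OF measurable_pair_swap[OF m1]] by (simp add: split_beta')
    then show ?thesis by (simp add: lborel_prod)
  qed
  have "(\<integral>\<^sup>+a. \<integral>\<^sup>+x. \<integral>\<^sup>+y. F a x y \<partial>lborel \<partial>lborel \<partial>lborel)
      = (\<integral>\<^sup>+a. \<integral>\<^sup>+xy. F a (fst xy) (snd xy) \<partial>lborel \<partial>lborel)"
    by (intro nn_integral_cong) (simp add: int2[OF m2])
  also have "\<dots> = (\<integral>\<^sup>+xy. \<integral>\<^sup>+a. F a (fst xy) (snd xy) \<partial>lborel \<partial>lborel)"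
    using pair_sigma_finite.Fubini[OF P m1] by simp
  also have "\<dots> = (\<integral>\<^sup>+x. \<integral>\<^sup>+y. \<integral>\<^sup>+a. F a x y \<partial>lborel \<partial>lborel \<partial>lborel)"
    by (simp add: int2[OF m3])
  finally show ?thesis .
qed


lemma subst_vals:
  fixes a p q x1 x2 :: real
  assumes "a \<noteq> 0" "q \<noteq> 0" "x1 \<noteq> 0"
  shows "a*p+((x1 - a*p)/q)*q = x1"
    "((a*x2 - q)/x1)*p+(1+((x1 - a*p)/q)*((a*x2 - q)/x1))/a*q = x2"
  using assms by (simp_all add: field_simps)

lemma Y_det:
  fixes a b c p q pp qq :: real
  assumes "a \<noteq> 0"
  shows "(a*p+b*q)*(c*pp+(1+b*c)/a*qq) - (c*p+(1+b*c)/a*q)*(a*pp+b*qq) = p*qq - q*pp"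
  using assms by (simp add: field_simps)

lemma Y1_val:
  fixes a p q pp qq x1 :: real
  assumes "q \<noteq> 0"
  shows "a*pp+((x1 - a*p)/q)*qq = (x1*qq - a*(p*qq-q*pp))/q"
  using assms by (simp add: field_simps)

lemma quad_id:
  fixes x1 x2 Y1 Y2 D :: real
  assumes "x1 \<noteq> 0" "x1*Y2 - x2*Y1 = D"
  shows "Y1^2+Y2^2 = ((x1^2+x2^2)/x1^2)*(Y1 + D*x2/(x1^2+x2^2))^2 + D^2/(x1^2+x2^2)"
proof -
  define R where "R = x1^2+x2^2"
  have R: "R > 0" using assms(1) by (simp add: R_def add_pos_nonneg)
  have x0: "x1^2 > 0" using assms(1) by simp
  have Y2: "Y2 = (D + x2*Y1)/x1" using assms by (simp add: field_simps)
  have e0: "Y1 + D*x2/R = (R*Y1 + D*x2)/R" using R by (simp add: field_simps)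
  have e1: "(R/x1^2)*(Y1 + D*x2/R)^2 = (R*Y1 + D*x2)^2/(x1^2*R)"
    unfolding e0 power_divide using R x0 by (simp add: power2_eq_square)
  have e2: "Y1^2+Y2^2 = (x1^2*Y1^2 + (D+x2*Y1)^2)/x1^2"
    using x0 unfolding Y2 power_divide by (simp add: add_divide_distrib)
  have e3: "(R*Y1 + D*x2)^2 + D^2*x1^2 = R*(x1^2*Y1^2 + (D+x2*Y1)^2)"
    unfolding R_def by (simp add: power2_eq_square algebra_simps)
  have "(R*Y1 + D*x2)^2/(x1^2*R) + D^2/R = ((R*Y1 + D*x2)^2 + D^2*x1^2)/(x1^2*R)"
    using R x0 by (simp add: field_simps)
  also have "\<dots> = (x1^2*Y1^2 + (D+x2*Y1)^2)/x1^2" unfolding e3 using R x0 by simp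
  finally show ?thesis unfolding R_def[symmetric] e1 e2 by simp
qed



lemma sqrt_diff_le: "0 \<le> A \<Longrightarrow> A \<le> B \<Longrightarrow> sqrt B - sqrt A \<le> sqrt (B - A)"
  using sqrt_add_le_add_sqrt[of A "B - A"] by simp

lemma sqset_meas:
  fixes A B :: real
  assumes "A \<le> B"
  shows "emeasure lborel {z::real. A \<le> z^2 \<and> z^2 \<le> B} \<le> ennreal (2 * sqrt (B - A))"
proof (cases "B < 0")
  case True
  have E: "{z::real. A \<le> z^2 \<and> z^2 \<le> B} = {}"
    using True by (auto, metis not_less order.strict_trans1 zero_le_power2)
  show ?thesis unfolding E by simp
next
  case False
  define A' where "A' = max A 0"
  define s t where "s = sqrt A'" "t = sqrt B"
  have st: "s \<le> t" unfolding s_t_def A'_def using assms False by auto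
  have sub: "{z::real. A \<le> z^2 \<and> z^2 \<le> B} \<subseteq> {-t..-s} \<union> {s..t}"
  proof
    fix z :: real assume "z \<in> {z. A \<le> z^2 \<and> z^2 \<le> B}"
    then have h: "A' \<le> z^2" "z^2 \<le> B" by (auto simp: A'_def)
    have "s \<le> \<bar>z\<bar>" unfolding s_t_def using real_sqrt_le_mono[OF h(1)] by simp
    moreover have "\<bar>z\<bar> \<le> t" unfolding s_t_def using real_sqrt_le_mono[OF h(2)] by simp
    ultimately show "z \<in> {-t..-s} \<union> {s..t}" by (cases "z \<ge> 0") auto
  qed
  have "emeasure lborel {z::real. A \<le> z^2 \<and> z^2 \<le> B} \<le> emeasure lborel ({-t..-s} \<union> {s..t})"
    by (rule emeasure_mono[OF sub]) simp
  also have "\<dots> \<le> emeasure lborel {-t..-s} + emeasure lborel {s..t}"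
    by (rule emeasure_subadditive) auto
  also have "\<dots> = ennreal (2*(t - s))" using st by (simp add: ennreal_plus[symmetric])
  also have "\<dots> \<le> ennreal (2 * sqrt (B - A))"
  proof -
    have "t - s \<le> sqrt (B - A')" unfolding s_t_def
      by (rule sqrt_diff_le) (use assms False in \<open>auto simp: A'_def\<close>)
    also have "\<dots> \<le> sqrt (B - A)" by (simp add: A'_def)
    finally show ?thesis by (intro ennreal_leI) simp
  qed
  finally show ?thesis .
qed

lemma affine_bound:
  fixes \<alpha> \<beta> A B :: real
  assumes "\<alpha> \<noteq> 0" "A \<le> B"
  shows "(\<integral>\<^sup>+a. indicator {z::real. A \<le> z^2 \<and> z^2 \<le> B} (\<beta> + \<alpha>*a) \<partial>lborel) \<le> ennreal (2 * sqrt (B-A)/\<bar>\<alpha>\<bar>)"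
proof -
  let ?S = "{z::real. A \<le> z^2 \<and> z^2 \<le> B}"
  let ?I = "(\<integral>\<^sup>+a. indicator ?S (\<beta> + \<alpha>*a) \<partial>lborel)"
  have Sm: "?S \<in> sets borel" by measurable
  have "emeasure lborel ?S = (\<integral>\<^sup>+z. indicator ?S z \<partial>lborel)" by simp
  also have "\<dots> = ennreal \<bar>\<alpha>\<bar> * ?I"
    by (rule nn_integral_real_affine[OF _ assms(1)]) (use Sm in simp)
  finally have eq: "emeasure lborel ?S = ennreal \<bar>\<alpha>\<bar> * ?I" .
  have "?I = ennreal (1/\<bar>\<alpha>\<bar>) * (ennreal \<bar>\<alpha>\<bar> * ?I)"
    using assms(1) by (simp add: mult.assoc[symmetric] ennreal_mult[symmetric])
  also have "\<dots> \<le> ennreal (1/\<bar>\<alpha>\<bar>) * ennreal (2 * sqrt (B-A))"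
    unfolding eq[symmetric] by (intro mult_left_mono sqset_meas assms) simp
  also have "\<dots> = ennreal ((1/\<bar>\<alpha>\<bar>) * (2 * sqrt (B-A)))"
    by (rule ennreal_mult[symmetric]) (use assms in auto)
  also have "\<dots> = ennreal (2 * sqrt (B-A)/\<bar>\<alpha>\<bar>)" by simp
  finally show ?thesis .
qed



definition Gf :: "real \<Rightarrow> real \<Rightarrow> real \<Rightarrow> real \<Rightarrow> real \<Rightarrow> real \<Rightarrow> real \<Rightarrow> real \<Rightarrow> real \<Rightarrow> ennreal" where
  "Gf p q pp qq L U a x1 x2 = (if x1 \<noteq> 0 then ennreal \<bar>1/q\<bar> * (ennreal \<bar>a/x1\<bar> *
      gf p q pp qq L U a ((x1 - a*p)/q) ((a*x2 - q)/x1)) else 0)"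

lemma ennreal_mult3: "0\<le>x \<Longrightarrow> 0\<le>y \<Longrightarrow> 0\<le>z \<Longrightarrow> ennreal x*(ennreal y*ennreal z) = ennreal (x*(y*z))"
  by (simp add: ennreal_mult)

lemma lin_k: "k*(x1*qq/q + D*x2/R) + (-k*D/q)*a = k*((x1*qq - a*D)/q + D*x2/(R::real))"
  by (simp add: algebra_simps diff_divide_distrib)

lemma Gf_pointwise:
  fixes p q pp qq L U a x1 x2 :: real
  assumes q: "q \<noteq> 0" and x1: "x1 \<noteq> 0"
  defines "D \<equiv> p*qq - q*pp"
  defines "R \<equiv> x1^2+x2^2"
  defines "\<alpha> \<equiv> -(sqrt R/\<bar>x1\<bar>)*D/q"
  defines "\<beta> \<equiv> (sqrt R/\<bar>x1\<bar>)*(x1*qq/q + D*x2/R)"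
  shows "Gf p q pp qq L U a x1 x2 \<le> (if L \<le> R \<and> R \<le> U then ennreal (1/(\<bar>q\<bar>*\<bar>x1\<bar>)) *
     indicator {z. L - D^2/R \<le> z^2 \<and> z^2 \<le> U - D^2/R} (\<beta> + \<alpha>*a) else 0)"
proof (cases "gf p q pp qq L U a ((x1 - a*p)/q) ((a*x2 - q)/x1) = 0")
  case True
  then show ?thesis by (simp add: Gf_def)
next
  case False
  define b c where "b = (x1 - a*p)/q" "c = (a*x2 - q)/x1"
  have a: "a \<noteq> 0" using False by (auto simp: gf_def)
  have cond: "L \<le> (a*p+b*q)^2 + (c*p+(1+b*c)/a*q)^2 \<and> (a*p+b*q)^2 + (c*p+(1+b*c)/a*q)^2 \<le> U
     \<and> L \<le> (a*pp+b*qq)^2 + (c*pp+(1+b*c)/a*qq)^2 \<and> (a*pp+b*qq)^2 + (c*pp+(1+b*c)/a*qq)^2 \<le> U"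
    using False unfolding b_c_def by (auto simp: gf_def split: if_splits)
  have gv: "gf p q pp qq L U a b c = ennreal (1/\<bar>a\<bar>)"
    using cond a by (simp add: gf_def)
  have X: "a*p+b*q = x1" "c*p+(1+b*c)/a*q = x2"
    using subst_vals[OF a q x1] unfolding b_c_def by auto
  define Y1 Y2 where "Y1 = a*pp+b*qq" "Y2 = c*pp+(1+b*c)/a*qq"
  have Y1v: "Y1 = (x1*qq - a*D)/q" unfolding Y1_Y2_def b_c_def D_def using Y1_val[OF q] by simp
  have det: "x1*Y2 - x2*Y1 = D" using Y_det[OF a, of p b q c pp qq] unfolding X Y1_Y2_def D_def .
  have Rpos: "R > 0" using x1 by (simp add: R_def add_pos_nonneg)
  have qi: "Y1^2+Y2^2 = (R/x1^2)*(Y1 + D*x2/R)^2 + D^2/R"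
    using quad_id[OF x1 det] unfolding R_def .
  have z: "\<beta> + \<alpha>*a = (sqrt R/\<bar>x1\<bar>)*(Y1 + D*x2/R)"
    unfolding \<alpha>_def \<beta>_def Y1v using lin_k[of "sqrt R/\<bar>x1\<bar>"] by simp
  have z2: "(\<beta> + \<alpha>*a)^2 = (R/x1^2)*(Y1 + D*x2/R)^2"
    unfolding z power_mult_distrib power_divide using Rpos by simp
  have inS: "\<beta> + \<alpha>*a \<in> {z. L - D^2/R \<le> z^2 \<and> z^2 \<le> U - D^2/R}"
  proof -
    have cy: "L \<le> Y1^2+Y2^2 \<and> Y1^2+Y2^2 \<le> U" using cond unfolding Y1_Y2_def by blast
    have "Y1^2+Y2^2 = (\<beta> + \<alpha>*a)^2 + D^2/R" using qi z2 by simp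
    then show ?thesis using cy by simp
  qed
  have ann: "L \<le> R \<and> R \<le> U" using cond unfolding X R_def by simp
  have "Gf p q pp qq L U a x1 x2 = ennreal \<bar>1/q\<bar> * (ennreal \<bar>a/x1\<bar> * ennreal (1/\<bar>a\<bar>))"
    using x1 gv by (simp add: Gf_def b_c_def)
  also have "\<dots> = ennreal (\<bar>1/q\<bar> * (\<bar>a/x1\<bar> * (1/\<bar>a\<bar>)))" by (rule ennreal_mult3) auto
  also have "\<dots> = ennreal (1/(\<bar>q\<bar>*\<bar>x1\<bar>))" using a by (simp add: abs_divide)
  finally show ?thesis using inS ann by simp
qed

lemma inner_a:
  fixes p q pp qq L U x1 x2 :: real
  assumes q: "q \<noteq> 0" and D: "p*qq - q*pp \<noteq> 0" and x1: "x1 \<noteq> 0" and L: "0 < L" "L \<le> U"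
  shows "(\<integral>\<^sup>+a. Gf p q pp qq L U a x1 x2 \<partial>lborel) \<le> (if L \<le> x1^2+x2^2 \<and> x1^2+x2^2 \<le> U
     then ennreal (2 * sqrt (U-L)/(sqrt L*\<bar>p*qq-q*pp\<bar>)) else 0)"
proof -
  define D where "D = p*qq - q*pp"
  define R where "R = x1^2+x2^2"
  define \<alpha> where "\<alpha> = -(sqrt R/\<bar>x1\<bar>)*D/q"
  define \<beta> where "\<beta> = (sqrt R/\<bar>x1\<bar>)*(x1*qq/q + D*x2/R)"
  define S where "S = {z::real. L - D^2/R \<le> z^2 \<and> z^2 \<le> U - D^2/R}"
  have Rpos: "R > 0" using x1 by (simp add: R_def add_pos_nonneg)
  have \<alpha>0: "\<alpha> \<noteq> 0" using Rpos x1 q D by (simp add: \<alpha>_def D_def)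
  have "(\<integral>\<^sup>+a. Gf p q pp qq L U a x1 x2 \<partial>lborel) \<le> (\<integral>\<^sup>+a. (if L \<le> R \<and> R \<le> U then
      ennreal (1/(\<bar>q\<bar>*\<bar>x1\<bar>)) * indicator S (\<beta> + \<alpha>*a) else 0) \<partial>lborel)"
  proof (intro nn_integral_mono)
    fix a
    show "Gf p q pp qq L U a x1 x2 \<le> (if L \<le> R \<and> R \<le> U then
      ennreal (1/(\<bar>q\<bar>*\<bar>x1\<bar>)) * indicator S (\<beta> + \<alpha>*a) else 0)"
      using Gf_pointwise[OF q x1, of p pp qq L U a x2] unfolding D_def R_def \<alpha>_def \<beta>_def S_def .
  qed
  also have "\<dots> \<le> (if L \<le> R \<and> R \<le> U then ennreal (2 * sqrt (U-L)/(sqrt L*\<bar>D\<bar>)) else 0)"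
  proof (cases "L \<le> R \<and> R \<le> U")
    case False then show ?thesis by (simp only: if_not_P[OF False]) simp
  next
    case True
    have Sm: "S \<in> sets borel" unfolding S_def by measurable
    have "(\<integral>\<^sup>+a. ennreal (1/(\<bar>q\<bar>*\<bar>x1\<bar>)) * indicator S (\<beta> + \<alpha>*a) \<partial>lborel)
        = ennreal (1/(\<bar>q\<bar>*\<bar>x1\<bar>)) * (\<integral>\<^sup>+a. indicator S (\<beta> + \<alpha>*a) \<partial>lborel)"
      by (rule nn_integral_cmult) (use Sm in measurable)
    also have "\<dots> \<le> ennreal (1/(\<bar>q\<bar>*\<bar>x1\<bar>)) * ennreal (2 * sqrt ((U - D^2/R) - (L - D^2/R))/\<bar>\<alpha>\<bar>)"
      unfolding S_def by (intro mult_left_mono affine_bound \<alpha>0) (use L in auto)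
    also have "\<dots> = ennreal (1/(\<bar>q\<bar>*\<bar>x1\<bar>) * (2 * sqrt (U-L)/\<bar>\<alpha>\<bar>))"
      by (subst ennreal_mult[symmetric]) (use L in auto)
    also have "1/(\<bar>q\<bar>*\<bar>x1\<bar>) * (2 * sqrt (U-L)/\<bar>\<alpha>\<bar>) = 2 * sqrt (U-L)/(sqrt R*\<bar>D\<bar>)"
      using q x1 Rpos by (simp add: \<alpha>_def abs_mult abs_divide field_simps)
    also have "ennreal (2 * sqrt (U-L)/(sqrt R*\<bar>D\<bar>)) \<le> ennreal (2 * sqrt (U-L)/(sqrt L*\<bar>D\<bar>))"
    proof (intro ennreal_leI divide_left_mono mult_right_mono)
      show "sqrt L \<le> sqrt R" using True by simp
    qed (use L D Rpos in \<open>auto simp: D_def\<close>)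
    finally show ?thesis by (simp only: if_P[OF True])
  qed
  finally show ?thesis unfolding D_def R_def .
qed



lemma Gf_meas: "(\<lambda>x. Gf p q pp qq L U (fst x) (fst (snd x)) (snd (snd x))) \<in> borel_measurable (lborel \<Otimes>\<^sub>M (lborel \<Otimes>\<^sub>M lborel))"
  unfolding Gf_def gf_def by measurable

lemma subst_bc:
  fixes p q pp qq L U a :: real
  assumes q: "q \<noteq> 0" and a: "a \<noteq> 0"
  shows "(\<integral>\<^sup>+b. \<integral>\<^sup>+c. gf p q pp qq L U a b c \<partial>lborel \<partial>lborel) = (\<integral>\<^sup>+x1. \<integral>\<^sup>+x2. Gf p q pp qq L U a x1 x2 \<partial>lborel \<partial>lborel)"
proof -
  define h where "h b = (\<integral>\<^sup>+c. gf p q pp qq L U a b c \<partial>lborel)" for b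
  have hm: "h \<in> borel_measurable borel" unfolding h_def gf_def by measurable
  have "(\<integral>\<^sup>+b. h b \<partial>lborel) = ennreal \<bar>1/q\<bar> * (\<integral>\<^sup>+x1. h (-a*p/q + (1/q)*x1) \<partial>lborel)"
    by (rule nn_integral_real_affine[OF hm]) (use q in simp)
  also have "(\<integral>\<^sup>+x1. h (-a*p/q + (1/q)*x1) \<partial>lborel) = (\<integral>\<^sup>+x1. (\<integral>\<^sup>+x2. ennreal \<bar>a/x1\<bar> * gf p q pp qq L U a ((x1 - a*p)/q) ((a*x2 - q)/x1) \<partial>lborel) \<partial>lborel)"
  proof (rule nn_integral_cong_AE)
    show "AE x1 in lborel. h (-a*p/q + (1/q)*x1) = (\<integral>\<^sup>+x2. ennreal \<bar>a/x1\<bar> * gf p q pp qq L U a ((x1 - a*p)/q) ((a*x2 - q)/x1) \<partial>lborel)"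
      using AE_lborel_singleton[of 0]
    proof (rule eventually_mono)
      fix x1 :: real assume x1: "x1 \<noteq> 0"
      define b where "b = (x1 - a*p)/q"
      have b: "-a*p/q + (1/q)*x1 = b" unfolding b_def using q by (simp add: field_simps)
      have gm: "(\<lambda>c. gf p q pp qq L U a b c) \<in> borel_measurable borel" unfolding gf_def by measurable
      have "h b = ennreal \<bar>a/x1\<bar> * (\<integral>\<^sup>+x2. gf p q pp qq L U a b (-q/x1 + (a/x1)*x2) \<partial>lborel)"
        unfolding h_def by (rule nn_integral_real_affine[OF gm]) (use a x1 in simp)
      also have "\<dots> = (\<integral>\<^sup>+x2. ennreal \<bar>a/x1\<bar> * gf p q pp qq L U a b (-q/x1 + (a/x1)*x2) \<partial>lborel)"
        by (rule nn_integral_cmult[symmetric]) (unfold gf_def, measurable)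
      also have "\<dots> = (\<integral>\<^sup>+x2. ennreal \<bar>a/x1\<bar> * gf p q pp qq L U a b ((a*x2 - q)/x1) \<partial>lborel)"
      proof (intro nn_integral_cong)
        fix x2 :: real
        have "-q/x1 + (a/x1)*x2 = (a*x2 - q)/x1" using x1 by (simp add: field_simps)
        then show "ennreal \<bar>a/x1\<bar> * gf p q pp qq L U a b (-q/x1 + (a/x1)*x2) = ennreal \<bar>a/x1\<bar> * gf p q pp qq L U a b ((a*x2 - q)/x1)" by simp
      qed
      finally show "h (-a*p/q + (1/q)*x1) = (\<integral>\<^sup>+x2. ennreal \<bar>a/x1\<bar> * gf p q pp qq L U a ((x1 - a*p)/q) ((a*x2 - q)/x1) \<partial>lborel)"
        unfolding b b_def .
    qed
  qed
  also have "ennreal \<bar>1/q\<bar> * (\<integral>\<^sup>+x1. (\<integral>\<^sup>+x2. ennreal \<bar>a/x1\<bar> * gf p q pp qq L U a ((x1 - a*p)/q) ((a*x2 - q)/x1) \<partial>lborel) \<partial>lborel)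
     = (\<integral>\<^sup>+x1. ennreal \<bar>1/q\<bar> * (\<integral>\<^sup>+x2. ennreal \<bar>a/x1\<bar> * gf p q pp qq L U a ((x1 - a*p)/q) ((a*x2 - q)/x1) \<partial>lborel) \<partial>lborel)"
    by (rule nn_integral_cmult[symmetric]) (unfold gf_def, measurable)
  also have "\<dots> = (\<integral>\<^sup>+x1. \<integral>\<^sup>+x2. Gf p q pp qq L U a x1 x2 \<partial>lborel \<partial>lborel)"
  proof (rule nn_integral_cong_AE)
    show "AE x1 in lborel. ennreal \<bar>1/q\<bar> * (\<integral>\<^sup>+x2. ennreal \<bar>a/x1\<bar> * gf p q pp qq L U a ((x1 - a*p)/q) ((a*x2 - q)/x1) \<partial>lborel) = (\<integral>\<^sup>+x2. Gf p q pp qq L U a x1 x2 \<partial>lborel)"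
      using AE_lborel_singleton[of 0]
    proof (rule eventually_mono)
      fix x1 :: real assume x1: "x1 \<noteq> 0"
      show "ennreal \<bar>1/q\<bar> * (\<integral>\<^sup>+x2. ennreal \<bar>a/x1\<bar> * gf p q pp qq L U a ((x1 - a*p)/q) ((a*x2 - q)/x1) \<partial>lborel) = (\<integral>\<^sup>+x2. Gf p q pp qq L U a x1 x2 \<partial>lborel)"
      proof -
        have "(\<integral>\<^sup>+x2. Gf p q pp qq L U a x1 x2 \<partial>lborel) = (\<integral>\<^sup>+x2. ennreal \<bar>1/q\<bar> * (ennreal \<bar>a/x1\<bar> * gf p q pp qq L U a ((x1 - a*p)/q) ((a*x2 - q)/x1)) \<partial>lborel)"
          by (rule nn_integral_cong) (simp add: Gf_def x1)
        also have "\<dots> = ennreal \<bar>1/q\<bar> * (\<integral>\<^sup>+x2. ennreal \<bar>a/x1\<bar> * gf p q pp qq L U a ((x1 - a*p)/q) ((a*x2 - q)/x1) \<partial>lborel)"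
          by (rule nn_integral_cmult) (unfold gf_def, measurable)
        finally show ?thesis by simp
      qed
    qed
  qed
  finally show ?thesis unfolding h_def .
qed



lemma annulus_meas:
  fixes L U :: real
  assumes "0 < L" "L \<le> U"
  shows "emeasure lborel {z::real\<times>real. L \<le> (fst z)^2+(snd z)^2 \<and> (fst z)^2+(snd z)^2 \<le> U} \<le> ennreal (pi*(U-L))"
proof -
  have sub: "{z::real\<times>real. L \<le> (fst z)^2+(snd z)^2 \<and> (fst z)^2+(snd z)^2 \<le> U} \<subseteq> cball 0 (sqrt U) - ball 0 (sqrt L)"
  proof
    fix z :: "real\<times>real"
    assume "z \<in> {z::real\<times>real. L \<le> (fst z)^2+(snd z)^2 \<and> (fst z)^2+(snd z)^2 \<le> U}"
    then have h: "L \<le> (fst z)^2+(snd z)^2" "(fst z)^2+(snd z)^2 \<le> U" by auto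
    have n: "norm z = sqrt ((fst z)^2+(snd z)^2)" by (cases z) (simp add: norm_Pair)
    show "z \<in> cball 0 (sqrt U) - ball 0 (sqrt L)"
      using real_sqrt_le_mono[OF h(1)] real_sqrt_le_mono[OF h(2)] n by (simp add: dist_norm)
  qed
  have dim: "DIM(real\<times>real) = 2" by simp
  have ubv: "unit_ball_vol 2 = pi" using unit_ball_vol_even[of 1] by simp
  have "emeasure lborel {z::real\<times>real. L \<le> (fst z)^2+(snd z)^2 \<and> (fst z)^2+(snd z)^2 \<le> U}
      \<le> emeasure lborel (cball (0::real\<times>real) (sqrt U) - ball 0 (sqrt L))"
    by (rule emeasure_mono[OF sub]) simp
  also have "\<dots> = emeasure lborel (cball (0::real\<times>real) (sqrt U)) - emeasure lborel (ball (0::real\<times>real) (sqrt L))"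
  proof (rule emeasure_Diff)
    show "emeasure lborel (ball (0::real\<times>real) (sqrt L)) \<noteq> \<infinity>"
      using emeasure_lborel_ball_finite[of "0::real\<times>real" "sqrt L"] by simp
    have "sqrt L \<le> sqrt U" using assms by simp
    then show "ball (0::real\<times>real) (sqrt L) \<subseteq> cball 0 (sqrt U)"
      using ball_subset_cball[of "0::real\<times>real" "sqrt L"] cball_subset_cball_iff[of "0::real\<times>real" "sqrt L" 0 "sqrt U"] by auto
  qed auto
  also have "\<dots> = ennreal (pi * U) - ennreal (pi * L)"
    using assms by (simp add: emeasure_cball emeasure_ball ubv)
  also have "\<dots> = ennreal (pi*(U-L))" using assms by (simp add: ennreal_minus algebra_simps)
  finally show ?thesis by simp
qed

lemma main_bound:
  fixes p q pp qq L U :: real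
  assumes q: "q \<noteq> 0" and D: "p*qq - q*pp \<noteq> 0" and L: "0 < L" "L \<le> U"
  shows "(\<integral>\<^sup>+x. gf p q pp qq L U (fst x) (fst (snd x)) (snd (snd x)) \<partial>lborel)
     \<le> ennreal (2 * sqrt (U-L)/(sqrt L*\<bar>p*qq-q*pp\<bar>)) * ennreal (pi*(U-L))"
proof -
  define K where "K = ennreal (2 * sqrt (U-L)/(sqrt L*\<bar>p*qq-q*pp\<bar>))"
  define Ann where "Ann = {z::real\<times>real. L \<le> (fst z)^2+(snd z)^2 \<and> (fst z)^2+(snd z)^2 \<le> U}"
  have "(\<integral>\<^sup>+x. gf p q pp qq L U (fst x) (fst (snd x)) (snd (snd x)) \<partial>lborel)
     = (\<integral>\<^sup>+a. \<integral>\<^sup>+b. \<integral>\<^sup>+c. gf p q pp qq L U a b c \<partial>lborel \<partial>lborel \<partial>lborel)"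
    using int3[OF gf_meas] by simp
  also have "\<dots> = (\<integral>\<^sup>+a. \<integral>\<^sup>+x1. \<integral>\<^sup>+x2. Gf p q pp qq L U a x1 x2 \<partial>lborel \<partial>lborel \<partial>lborel)"
  proof (rule nn_integral_cong)
    fix a :: real
    show "(\<integral>\<^sup>+b. \<integral>\<^sup>+c. gf p q pp qq L U a b c \<partial>lborel \<partial>lborel) = (\<integral>\<^sup>+x1. \<integral>\<^sup>+x2. Gf p q pp qq L U a x1 x2 \<partial>lborel \<partial>lborel)"
    proof (cases "a = 0")
      case True
      have z1: "Gf p q pp qq L U 0 x1 x2 = 0" for x1 x2 by (simp add: Gf_def gf_def)
      have z2: "gf p q pp qq L U 0 b c = 0" for b c by (simp add: gf_def)
      show ?thesis by (simp add: True z1 z2)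
    next
      case False then show ?thesis by (rule subst_bc[OF q])
    qed
  qed
  also have "\<dots> = (\<integral>\<^sup>+x1. \<integral>\<^sup>+x2. \<integral>\<^sup>+a. Gf p q pp qq L U a x1 x2 \<partial>lborel \<partial>lborel \<partial>lborel)"
    by (rule swap3[OF Gf_meas])
  also have "\<dots> \<le> (\<integral>\<^sup>+x1. \<integral>\<^sup>+x2. K * indicator Ann (x1,x2) \<partial>lborel \<partial>lborel)"
  proof (intro nn_integral_mono)
    fix x1 x2 :: real
    show "(\<integral>\<^sup>+a. Gf p q pp qq L U a x1 x2 \<partial>lborel) \<le> K * indicator Ann (x1,x2)"
    proof (cases "x1 = 0")
      case True then show ?thesis by (simp add: Gf_def)
    next
      case False
      from inner_a[OF q D False L, of x2] show ?thesis
        by (cases "L \<le> x1^2+x2^2 \<and> x1^2+x2^2 \<le> U") (simp_all add: K_def Ann_def indicator_def)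
    qed
  qed
  also have "\<dots> = (\<integral>\<^sup>+z. K * indicator Ann z \<partial>lborel)"
    by (rule int2[symmetric]) (unfold Ann_def, measurable)
  also have "\<dots> = K * emeasure lborel Ann"
  proof (rule nn_integral_cmult_indicator)
    have fm: "(\<lambda>z::real\<times>real. (fst z)^2+(snd z)^2) \<in> borel_measurable (lborel \<Otimes>\<^sub>M lborel)" by measurable
    have "(\<lambda>z::real\<times>real. (fst z)^2+(snd z)^2) -` {L..U} \<inter> space (lborel \<Otimes>\<^sub>M lborel) \<in> sets (lborel \<Otimes>\<^sub>M lborel)"
      by (rule measurable_sets[OF fm]) simp
    moreover have "(\<lambda>z::real\<times>real. (fst z)^2+(snd z)^2) -` {L..U} \<inter> space (lborel \<Otimes>\<^sub>M lborel) = Ann"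
      by (auto simp: Ann_def space_pair_measure)
    ultimately have "Ann \<in> sets (lborel \<Otimes>\<^sub>M (lborel::real measure))" by simp
    then have "Ann \<in> sets (borel \<Otimes>\<^sub>M (borel::real measure))" by simp
    then show "Ann \<in> sets lborel" by (simp only: borel_prod sets_lborel)
  qed
  also have "\<dots> \<le> K * ennreal (pi*(U-L))"
    unfolding Ann_def by (intro mult_left_mono annulus_meas L) simp
  finally show ?thesis unfolding K_def .
qed



lemma mv: "((sl2_of a b c) *v (v::real^2)) $ 1 = a * v$1 + b * v$2"
          "((sl2_of a b c) *v (v::real^2)) $ 2 = c * v$1 + (1+b*c)/a * v$2"
  by (simp_all add: sl2_of_def matrix_vector_mult_def sum_2)

lemma haar_le_gf:
  fixes v u :: "real^2" and \<tau> :: real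
  shows "haar_SL2 (E_set v u \<tau>) \<le> (\<integral>\<^sup>+x. gf (v$1) (v$2) (u$1) (u$2) (exp (-\<tau>)^2) (exp \<tau>^2) (fst x) (fst (snd x)) (snd (snd x)) \<partial>lborel)"
  unfolding haar_SL2_def
proof (rule nn_integral_mono)
  fix x :: "real\<times>real\<times>real"
  obtain a b c where x: "x = (a,b,c)" by (cases x) auto
  show "(case x of (a, b, c) \<Rightarrow> if a \<noteq> 0 \<and> sl2_of a b c \<in> E_set v u \<tau> then ennreal (1 / \<bar>a\<bar>) else 0)
    \<le> gf (v$1) (v$2) (u$1) (u$2) (exp (-\<tau>)^2) (exp \<tau>^2) (fst x) (fst (snd x)) (snd (snd x))"
  proof (cases "a \<noteq> 0 \<and> sl2_of a b c \<in> E_set v u \<tau>")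
    case False then show ?thesis unfolding x by (simp only: prod.case if_not_P[OF False]) simp
  next
    case True
    then have a: "a \<noteq> 0" and E: "sl2_of a b c \<in> E_set v u \<tau>" by auto
    let ?X1 = "a * v$1+b * v$2" and ?X2 = "c * v$1+(1+b*c)/a * v$2"
    let ?Y1 = "a*u$1+b*u$2" and ?Y2 = "c*u$1+(1+b*c)/a*u$2"
    have "exp (-\<tau>) \<le> sqrt (?X1^2+?X2^2)" "sqrt (?X1^2+?X2^2) \<le> exp \<tau>"
         "exp (-\<tau>) \<le> sqrt (?Y1^2+?Y2^2)" "sqrt (?Y1^2+?Y2^2) \<le> exp \<tau>"
      using E by (simp_all add: E_set_def norm2 mv)
    then have "exp (-\<tau>)^2 \<le> ?X1^2+?X2^2 \<and> ?X1^2+?X2^2 \<le> exp \<tau>^2 \<and>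
       exp (-\<tau>)^2 \<le> ?Y1^2+?Y2^2 \<and> ?Y1^2+?Y2^2 \<le> exp \<tau>^2"
      by (auto intro: sq_le_of_sqrt sq_of_sqrt_le)
    then show ?thesis using True by (simp add: x gf_def)
  qed
qed

lemma core:
  fixes v u :: "real^2" and \<tau> c :: real
  assumes q: "v$2 \<noteq> 0" and D: "c^2/32 \<le> \<bar>v$1*u$2 - v$2*u$1\<bar>" and t: "0 < \<tau>" "\<tau> \<le> 1/2" and c: "c > 0"
  shows "haar_SL2 (E_set v u \<tau>) \<le> ennreal (3072*pi/c^2 * \<tau> powr (3/2))"
proof -
  define L U where "L = exp (-\<tau>)^2" "U = exp \<tau>^2"
  define Dv where "Dv = \<bar>v$1*u$2 - v$2*u$1\<bar>"
  have c2: "c^2 > 0" using c by simp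
  have Dpos: "Dv > 0" using D c2 unfolding Dv_def by linarith
  have L0: "0 < L" unfolding L_U_def by simp
  have LU: "L \<le> U" unfolding L_U_def
    by (intro power_mono) (use t in auto)
  have UL8: "U - L \<le> 8*\<tau>" unfolding L_U_def using exp_diff_bound[of \<tau>] t by simp
  have sL: "sqrt L = exp (-\<tau>)" unfolding L_U_def by simp
  have sL2: "1/2 \<le> sqrt L" unfolding sL using exp_ge_add_one_self[of "-\<tau>"] t by linarith
  have sq: "sqrt (U-L) \<le> 3 * sqrt \<tau>"
  proof -
    have "sqrt (U-L) \<le> sqrt (8*\<tau>)" using UL8 by simp
    also have "\<dots> = sqrt 8 * sqrt \<tau>" by (simp add: real_sqrt_mult)
    also have "\<dots> \<le> 3 * sqrt \<tau>"
    proof (intro mult_right_mono)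
      show "sqrt 8 \<le> (3::real)" by (rule real_le_lsqrt) auto
    qed (use t in simp)
    finally show ?thesis .
  qed
  have dd: "c^2/64 \<le> sqrt L * Dv"
  proof -
    have "(1/2) * (c^2/32) \<le> sqrt L * Dv"
      by (intro mult_mono sL2) (use D c2 L0 in \<open>auto simp: Dv_def\<close>)
    then show ?thesis by simp
  qed
  have f1: "2 * sqrt (U-L)/(sqrt L*Dv) \<le> 384 * sqrt \<tau> / c^2"
  proof -
    have "2 * sqrt (U-L)/(sqrt L*Dv) \<le> 2 * (3 * sqrt \<tau>)/(c^2/64)"
      by (intro frac_le) (use sq dd c2 LU t in auto)
    also have "\<dots> = 384 * sqrt \<tau> / c^2" by simp
    finally show ?thesis .
  qed
  have f2: "pi*(U-L) \<le> pi*(8*\<tau>)" using UL8 by simp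
  have "2 * sqrt (U-L)/(sqrt L*Dv) * (pi*(U-L)) \<le> 384 * sqrt \<tau> / c^2 * (pi*(8*\<tau>))"
    by (intro mult_mono f1 f2) (use LU Dpos L0 UL8 t in auto)
  also have "\<dots> = 3072*pi/c^2 * (\<tau> * sqrt \<tau>)" by (simp add: field_simps)
  also have "\<tau> * sqrt \<tau> = \<tau> powr (3/2)"
  proof -
    have "\<tau> powr (3/2) = \<tau> powr (1 + 1/2)" by simp
    also have "\<dots> = \<tau> powr 1 * \<tau> powr (1/2)" by (rule powr_add)
    also have "\<tau> powr 1 = \<tau>" using t by simp
    also have "\<tau> powr (1/2) = sqrt \<tau>" using t by (simp add: powr_half_sqrt)
    finally show ?thesis by simp
  qed
  finally have real_bd: "2 * sqrt (U-L)/(sqrt L*Dv) * (pi*(U-L)) \<le> 3072*pi/c^2 * \<tau> powr (3/2)" .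
  have "haar_SL2 (E_set v u \<tau>) \<le> (\<integral>\<^sup>+x. gf (v$1) (v$2) (u$1) (u$2) L U (fst x) (fst (snd x)) (snd (snd x)) \<partial>lborel)"
    unfolding L_U_def by (rule haar_le_gf)
  also have "\<dots> \<le> ennreal (2 * sqrt (U-L)/(sqrt L*Dv)) * ennreal (pi*(U-L))"
    unfolding Dv_def by (rule main_bound[OF q _ L0 LU]) (use Dpos in \<open>simp add: Dv_def\<close>)
  also have "\<dots> = ennreal (2 * sqrt (U-L)/(sqrt L*Dv) * (pi*(U-L)))"
    by (rule ennreal_mult[symmetric]) (use LU Dpos L0 in auto)
  also have "\<dots> \<le> ennreal (3072*pi/c^2 * \<tau> powr (3/2))"
    by (rule ennreal_leI[OF real_bd])
  finally show ?thesis .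
qed



lemma E_swap: "E_set v u \<tau> = E_set u v \<tau>"
  unfolding E_set_def by auto

lemma haar_empty: "haar_SL2 {} = 0"
  unfolding haar_SL2_def by (simp add: case_prod_unfold)

theorem proposition3p3:
  fixes c :: real
  assumes "c > 0"
  shows "\<exists>C \<tau>0. C > 0 \<and> \<tau>0 > 0 \<and>
    (\<forall>\<tau> (v::real^2) v'. 0 < \<tau> \<and> \<tau> < \<tau>0 \<and> norm (v - v') \<ge> c \<and> norm (v + v') \<ge> c \<longrightarrow>
       haar_SL2 (E_set v v' \<tau>) \<le> ennreal (C * \<tau> powr (3/2)))"
proof -
  define \<tau>0 where "\<tau>0 = min (1/2) (c^2/128)"
  define C where "C = 3072*pi/c^2"
  have c2: "c^2 > 0" using assms by simp
  show ?thesis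
  proof (intro exI conjI allI impI)
    show "C > 0" unfolding C_def using c2 by simp
    show "\<tau>0 > 0" unfolding \<tau>0_def using c2 by simp
    fix \<tau> :: real and v w :: "real^2"
    assume h: "0 < \<tau> \<and> \<tau> < \<tau>0 \<and> norm (v - w) \<ge> c \<and> norm (v + w) \<ge> c"
    have t: "0 < \<tau>" "\<tau> \<le> 1/2" "\<tau> \<le> c^2/128" using h unfolding \<tau>0_def by auto
    show "haar_SL2 (E_set v w \<tau>) \<le> ennreal (C * \<tau> powr (3/2))"
    proof (cases "E_set v w \<tau> = {}")
      case True then show ?thesis by (simp add: haar_empty)
    next
      case False
      then obtain g where g: "g \<in> E_set v w \<tau>" by auto
      have D: "c^2/32 \<le> \<bar>v$1*w$2 - v$2*w$1\<bar>"
        by (rule D_bound[OF g t assms]) (use h in auto)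
      show ?thesis
      proof (cases "v$2 = 0")
        case False
        show ?thesis unfolding C_def by (rule core[OF False D t(1,2) assms])
      next
        case True
        have w2: "w$2 \<noteq> 0" using D True c2 by auto
        have D': "c^2/32 \<le> \<bar>w$1 * v$2 - w$2 * v$1\<bar>" using D by (simp add: abs_minus_commute algebra_simps)
        show ?thesis unfolding C_def E_swap[of v w] by (rule core[OF w2 D' t(1,2) assms])
      qed
    qed
  qed
qed

end
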